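(* Let $n\ge2$ and let $\Lambda:B(\mathcal{H}_n)\to B(\mathcal{H}_m)$ be a positive linear map. Then $\Lambda$ is $2$-positive if and only if $(\mathbf{1}_2\otimes\Lambda)(|\Psi^\beta\rangle\langle\Psi^\beta|)\ge0$ for all vectors $|\Psi^\beta\rangle=|0\rangle|\beta_0\rangle+|1\rangle|\beta_1\rangle\in\mathcal{H}_2\otimes\mathcal{H}_n$ with $|\beta_0\rangle,|\beta_1\rangle$ orthonormal.
   Context: $B(\mathcal{H}_n)$ is the algebra of operators on an $n$-dimensional Hilbert space; $\{|0\rangle,|1\rangle\}$ is an orthonormal basis of $\mathcal{H}_2$. A linear map $\Lambda$ is positive if it maps positive semidefinite operators to positive semidefinite operators, and $2$-positive if $\mathbf{1}_2\otimes\Lambda$ is positive, where $\mathbf{1}_2$ is the identity map on $B(\mathcal{H}_2)$. *)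

theory Defs
  imports "HOL-Analysis.Analysis"
begin

text \<open>Operators on a finite-dimensional Hilbert space with orthonormal basis indexed
  by the finite type 'n are represented as complex matrices complex^'n^'n.\<close>

definition cinner :: "complex^'n \<Rightarrow> complex^'n \<Rightarrow> complex" where
  "cinner x y = (\<Sum>i\<in>UNIV. cnj (x $ i) * y $ i)"

definition psd :: "complex^'n^'n \<Rightarrow> bool" where
  "psd A \<longleftrightarrow> (\<forall>x::complex^'n. let q = (\<Sum>i\<in>UNIV. \<Sum>j\<in>UNIV. cnj (x $ i) * A $ i $ j * x $ j)
                 in Im q = 0 \<and> Re q \<ge> 0)"

definition mscale :: "complex \<Rightarrow> complex^'n^'k \<Rightarrow> complex^'n^'k" where
  "mscale c A = (\<chi> i j. c * A $ i $ j)"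

definition clinear_map :: "(complex^'n^'n \<Rightarrow> complex^'m^'m) \<Rightarrow> bool" where
  "clinear_map L \<longleftrightarrow> (\<forall>A B. L (A + B) = L A + L B) \<and> (\<forall>c A. L (mscale c A) = mscale c (L A))"

definition positive_map :: "(complex^'n^'n \<Rightarrow> complex^'m^'m) \<Rightarrow> bool" where
  "positive_map L \<longleftrightarrow> (\<forall>A. psd A \<longrightarrow> psd (L A))"

text \<open>The map id_2 \<otimes> L on B(H_2 \<otimes> H_n), with H_2 \<otimes> H_n indexed by 2 \<times> 'n:
  a block operator (X_ab) is sent to (L X_ab).\<close>
definition id2_tensor :: "(complex^'n^'n \<Rightarrow> complex^'m^'m)
    \<Rightarrow> complex^(2 \<times> 'n)^(2 \<times> 'n) \<Rightarrow> complex^(2 \<times> 'm)^(2 \<times> 'm)" where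
  "id2_tensor L X = (\<chi> p q. L (\<chi> i j. X $ (fst p, i) $ (fst q, j)) $ snd p $ snd q)"

definition two_positive :: "(complex^'n^'n \<Rightarrow> complex^'m^'m) \<Rightarrow> bool" where
  "two_positive L \<longleftrightarrow> positive_map (id2_tensor L)"

definition psi_vec :: "complex^'n \<Rightarrow> complex^'n \<Rightarrow> complex^(2 \<times> 'n)" where
  "psi_vec b0 b1 = (\<chi> p. if fst p = 0 then b0 $ snd p else b1 $ snd p)"

definition proj :: "complex^'k \<Rightarrow> complex^'k^'k" where
  "proj v = (\<chi> p q. v $ p * cnj (v $ q))"

end

theory Submission
  imports Defs
begin

definition qf :: "complex^'k^'k \<Rightarrow> complex^'k \<Rightarrow> complex" where
  "qf A x = (\<Sum>i\<in>UNIV. \<Sum>j\<in>UNIV. cnj (x $ i) * A $ i $ j * x $ j)"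

lemma psd_qf: "psd A \<longleftrightarrow> (\<forall>x. Im (qf A x) = 0 \<and> Re (qf A x) \<ge> 0)"
  unfolding psd_def qf_def Let_def by simp

lemma qf_add: "qf (A + B) x = qf A x + qf B x"
  unfolding qf_def by (simp add: distrib_left distrib_right sum.distrib)

lemma qf_zero: "qf 0 x = 0"
  unfolding qf_def by simp

lemma psd_zero: "psd 0"
  unfolding psd_qf qf_zero by simp

lemma psd_add: "psd A \<Longrightarrow> psd B \<Longrightarrow> psd (A + B)"
  unfolding psd_qf qf_add by simp

lemma psd_sum: "finite S \<Longrightarrow> (\<And>i. i \<in> S \<Longrightarrow> psd (f i)) \<Longrightarrow> psd (sum f S)"
  by (induction S rule: finite_induct) (auto intro: psd_add psd_zero)

lemma qf_proj: "qf (proj v) x = cnj (\<Sum>j\<in>UNIV. cnj (v $ j) * x $ j) * (\<Sum>j\<in>UNIV. cnj (v $ j) * x $ j)"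
  unfolding qf_def proj_def by (simp add: sum_product mult_ac)

lemma cnj_mult_self: "Im (cnj z * z) = 0 \<and> Re (cnj z * z) \<ge> 0"
  by simp

lemma psd_proj: "psd (proj v)"
  unfolding psd_qf qf_proj by (intro allI cnj_mult_self)

lemma sum_two_pts:
  fixes f :: "'k::finite \<Rightarrow> complex"
  assumes "i \<noteq> j" "\<And>k. k \<noteq> i \<Longrightarrow> k \<noteq> j \<Longrightarrow> f k = 0"
  shows "sum f UNIV = f i + f j"
proof -
  have "sum f UNIV = sum f {i, j}"
    by (rule sum.mono_neutral_right) (use assms in auto)
  then show ?thesis using assms(1) by simp
qed

lemma qf_two_gen:
  fixes A :: "complex^'k^'k"
  assumes "i \<noteq> j" "x$i = a" "x$j = b" "\<And>k. k \<noteq> i \<Longrightarrow> k \<noteq> j \<Longrightarrow> x$k = 0"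
  shows "qf A x =
     cnj a * A$i$i * a + cnj a * A$i$j * b + cnj b * A$j$i * a + cnj b * A$j$j * b"
proof -
  have "qf A x = (\<Sum>l\<in>UNIV. cnj (x $ i) * A $ i $ l * x $ l) + (\<Sum>l\<in>UNIV. cnj (x $ j) * A $ j $ l * x $ l)"
    unfolding qf_def by (rule sum_two_pts) (use assms in auto)
  also have "(\<Sum>l\<in>UNIV. cnj (x $ i) * A $ i $ l * x $ l) = cnj (x $ i) * A $ i $ i * x $ i + cnj (x $ i) * A $ i $ j * x $ j"
    by (rule sum_two_pts) (use assms in auto)
  also have "(\<Sum>l\<in>UNIV. cnj (x $ j) * A $ j $ l * x $ l) = cnj (x $ j) * A $ j $ i * x $ i + cnj (x $ j) * A $ j $ j * x $ j"
    by (rule sum_two_pts) (use assms in auto)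
  finally show ?thesis using assms by simp
qed

lemma qf_two:
  fixes A :: "complex^'k^'k"
  assumes "i \<noteq> j"
  shows "qf A (\<chi> k. if k = i then a else if k = j then b else 0) =
     cnj a * A$i$i * a + cnj a * A$i$j * b + cnj b * A$j$i * a + cnj b * A$j$j * b"
  by (rule qf_two_gen) (use assms in auto)

lemma qf_one:
  fixes A :: "complex^'k^'k"
  shows "qf A (\<chi> k. if k = i then a else 0) = cnj a * A$i$i * a"
proof -
  have one: "sum f UNIV = f i" if "\<And>k. k \<noteq> i \<Longrightarrow> f k = 0" for f :: "'k \<Rightarrow> complex"
  proof -
    have "sum f UNIV = sum f {i}"
      by (rule sum.mono_neutral_right) (use that in auto)
    then show ?thesis by simp
  qed
  let ?x = "(\<chi> k. if k = i then a else 0) :: complex^'k"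
  have "qf A ?x = (\<Sum>l\<in>UNIV. cnj (?x $ i) * A $ i $ l * ?x $ l)"
    unfolding qf_def by (rule one) simp
  also have "\<dots> = cnj (?x $ i) * A $ i $ i * ?x $ i"
    by (rule one) simp
  finally show ?thesis by simp
qed

lemma psd_diag:
  assumes "psd A" shows "Im (A$i$i) = 0" "Re (A$i$i) \<ge> 0"
proof -
  have e: "qf A (\<chi> k. if k = i then 1 else 0) = A$i$i" using qf_one[of A i 1] by simp
  have "Im (qf A (\<chi> k. if k = i then 1 else 0)) = 0 \<and> Re (qf A (\<chi> k. if k = i then 1 else 0)) \<ge> 0"
    using assms unfolding psd_qf by blast
  then show "Im (A$i$i) = 0" "Re (A$i$i) \<ge> 0" unfolding e by auto
qed

lemma psd_herm:
  fixes A :: "complex^'k^'k"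
  assumes "psd A" shows "A$j$i = cnj (A$i$j)"
proof (cases "i = j")
  case True
  have "Im (A$j$j) = 0" using psd_diag[OF assms, of j] by simp
  then show ?thesis unfolding True by (intro complex_eqI) auto
next
  case False
  have d: "Im (A$i$i) = 0" "Im (A$j$j) = 0" using psd_diag[OF assms] by auto
  have "Im (qf A (\<chi> k. if k = i then 1 else if k = j then 1 else 0)) = 0"
    using assms unfolding psd_qf by blast
  moreover have "Im (qf A (\<chi> k. if k = i then 1 else if k = j then 1 else 0)) = Im (A$i$i) + Im (A$i$j) + Im (A$j$i) + Im (A$j$j)"
    by (subst qf_two[OF False]) simp
  ultimately have 1: "Im (A$i$j) + Im (A$j$i) = 0" using d by linarith
  have "Im (qf A (\<chi> k. if k = i then 1 else if k = j then \<i> else 0)) = 0"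
    using assms unfolding psd_qf by blast
  moreover have "Im (qf A (\<chi> k. if k = i then 1 else if k = j then \<i> else 0)) = Im (A$i$i) + Re (A$i$j) - Re (A$j$i) + Im (A$j$j)"
    by (subst qf_two[OF False]) simp
  ultimately have 2: "Re (A$i$j) - Re (A$j$i) = 0" using d by linarith
  show ?thesis
  proof (rule complex_eqI)
    show "Re (A$j$i) = Re (cnj (A$i$j))" using 2 by simp
    show "Im (A$j$i) = Im (cnj (A$i$j))" using 1 by simp
  qed
qed

lemma psd_zero_row:
  fixes A :: "complex^'k^'k"
  assumes "psd A" "A$r$r = 0" shows "A$r$j = 0"
proof (rule ccontr)
  assume nz: "A$r$j \<noteq> 0"
  then have ne: "j \<noteq> r" using assms by auto
  define z where "z = A$r$j"
  define c where "c = (Re (A$j$j) + 1) / (2 * (cmod z)^2)"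
  have zpos: "(cmod z)^2 > 0" using nz z_def by simp
  define t where "t = - complex_of_real c * z"
  have h: "A$j$r = cnj z" unfolding z_def by (rule psd_herm[OF assms(1)])
  have "Re (qf A (\<chi> k. if k = r then t else if k = j then 1 else 0)) \<ge> 0"
    using assms unfolding psd_qf by blast
  moreover have "qf A (\<chi> k. if k = r then t else if k = j then 1 else 0) = cnj t * z + cnj z * t + A$j$j"
    unfolding qf_two[OF ne[symmetric]] assms(2) h z_def[symmetric] by simp
  ultimately have "Re (cnj t * z + cnj z * t + A$j$j) \<ge> 0" by simp
  moreover have "Re (cnj t * z + cnj z * t) = - 2 * c * (cmod z)^2"
  proof -
    have "Re (cnj t * z + cnj z * t) = - 2 * c * (Re z * Re z + Im z * Im z)"
      unfolding t_def by (simp add: algebra_simps)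
    also have "Re z * Re z + Im z * Im z = (cmod z)^2" unfolding cmod_power2 by (simp add: power2_eq_square)
    finally show ?thesis .
  qed
  moreover have "2 * c * (cmod z)^2 = Re (A$j$j) + 1"
    unfolding c_def using zpos by simp
  ultimately show False by simp
qed

lemma qf_diff: "qf (A - B) x = qf A x - qf B x"
  using qf_add[of "A - B" B x] by simp

lemma qf_cong_row:
  fixes Z :: "complex^'k^'k"
  assumes "\<And>j. Z$r$j = 0" "\<And>i. Z$i$r = 0" "\<And>k. k \<noteq> r \<Longrightarrow> x$k = y$k"
  shows "qf Z x = qf Z y"
  unfolding qf_def
proof (intro sum.cong refl)
  fix i j
  show "cnj (x $ i) * Z $ i $ j * x $ j = cnj (y $ i) * Z $ i $ j * y $ j"
    by (cases "i = r"; cases "j = r") (simp_all add: assms)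
qed

lemma schur:
  fixes X :: "complex^'k^'k"
  assumes X: "psd X" and pos: "Re (X$r$r) > 0"
  defines "s \<equiv> sqrt (Re (X$r$r))"
  defines "v \<equiv> (\<chi> i. X$i$r / complex_of_real s)"
  shows "psd (X - proj v)" "\<And>j. (X - proj v)$r$j = 0" "\<And>i. (X - proj v)$i$r = 0"
proof -
  have spos: "s > 0" unfolding s_def using pos by simp
  have ss: "s * s = Re (X$r$r)" unfolding s_def using pos by simp
  have xr: "X$r$r = complex_of_real (s * s)"
    using psd_diag(1)[OF X, of r] ss by (intro complex_eqI) auto
  have hc: "cnj (X$j$r) = X$r$j" for j
    using psd_herm[OF X, of j r] by simp
  have hc2: "cnj (X$r$j) = X$j$r" for j
    using psd_herm[OF X, of r j] by simp
  have sne: "complex_of_real s \<noteq> 0" using spos by simp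
  show row: "(X - proj v)$r$j = 0" for j
  proof -
    have "(X - proj v)$r$j = X$r$j - (X$r$r / complex_of_real s) * (cnj (X$j$r) / complex_of_real s)"
      unfolding proj_def v_def by simp
    also have "\<dots> = X$r$j - complex_of_real (s * s) * X$r$j / (complex_of_real s * complex_of_real s)"
      unfolding hc xr by simp
    also have "\<dots> = 0" using sne by simp
    finally show ?thesis .
  qed
  show col: "(X - proj v)$i$r = 0" for i
  proof -
    have "(X - proj v)$i$r = X$i$r - (X$i$r / complex_of_real s) * (cnj (X$r$r) / complex_of_real s)"
      unfolding proj_def v_def by simp
    also have "\<dots> = X$i$r - complex_of_real (s * s) * X$i$r / (complex_of_real s * complex_of_real s)"
      unfolding xr by simp
    also have "\<dots> = 0" using sne by simp
    finally show ?thesis .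
  qed
  show "psd (X - proj v)"
    unfolding psd_qf
  proof
    fix x :: "complex^'k"
    define y where "y = (\<chi> k. if k = r then - (\<Sum>j\<in>UNIV-{r}. X$r$j * x$j) / X$r$r else x$k)"
    have xy: "qf (X - proj v) x = qf (X - proj v) y"
      by (rule qf_cong_row[of _ r], rule row, rule col, simp add: y_def)
    have xrne: "X$r$r \<noteq> 0" using pos by auto
    have "(\<Sum>j\<in>UNIV. X$r$j * y$j) = X$r$r * y$r + (\<Sum>j\<in>UNIV-{r}. X$r$j * y$j)"
      by (simp add: sum.remove)
    also have "(\<Sum>j\<in>UNIV-{r}. X$r$j * y$j) = (\<Sum>j\<in>UNIV-{r}. X$r$j * x$j)"
      by (rule sum.cong) (auto simp: y_def)
    also have "X$r$r * y$r = - (\<Sum>j\<in>UNIV-{r}. X$r$j * x$j)"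
      using xrne by (simp add: y_def)
    finally have S0: "(\<Sum>j\<in>UNIV. X$r$j * y$j) = 0" by simp
    have "(\<Sum>j\<in>UNIV. cnj (v$j) * y$j) = (\<Sum>j\<in>UNIV. X$r$j * y$j) / complex_of_real s"
      unfolding v_def by (simp add: hc sum_divide_distrib)
    then have "(\<Sum>j\<in>UNIV. cnj (v$j) * y$j) = 0" using S0 by simp
    then have "qf (proj v) y = 0" unfolding qf_proj by simp
    then have "qf (X - proj v) x = qf X y" using xy qf_diff[of X "proj v" y] by simp
    then show "Im (qf (X - proj v) x) = 0 \<and> Re (qf (X - proj v) x) \<ge> 0"
      using X unfolding psd_qf by simp
  qed
qed

lemma schur_ex:
  fixes X :: "complex^'k^'k"
  assumes X: "psd X" and pos: "Re (X$r$r) > 0"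
  shows "\<exists>v. psd (X - proj v) \<and> (\<forall>j. (X - proj v)$r$j = 0) \<and> (\<forall>i. (X - proj v)$i$r = 0)
     \<and> (\<forall>i. X$i$r = 0 \<longrightarrow> v$i = 0)"
proof (rule exI[of _ "(\<chi> i. X$i$r / complex_of_real (sqrt (Re (X$r$r))))"], intro conjI allI impI)
  show "psd (X - proj (\<chi> i. X$i$r / complex_of_real (sqrt (Re (X$r$r)))))" by (rule schur(1)[OF X pos])
  show "(X - proj (\<chi> i. X$i$r / complex_of_real (sqrt (Re (X$r$r)))))$r$j = 0" for j by (rule schur(2)[OF X pos])
  show "(X - proj (\<chi> i. X$i$r / complex_of_real (sqrt (Re (X$r$r)))))$i$r = 0" for i by (rule schur(3)[OF X pos])
  show "(\<chi> i. X$i$r / complex_of_real (sqrt (Re (X$r$r))))$i = 0" if "X$i$r = 0" for i using that by simp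
qed

lemma proj_zero: "proj 0 = 0"
  unfolding proj_def by (simp add: vec_eq_iff)

lemma decomp_aux:
  fixes S :: "'k::finite set" and X :: "complex^'k^'k"
  assumes "finite S"
  shows "psd X \<Longrightarrow> (\<forall>i j. i \<notin> S \<or> j \<notin> S \<longrightarrow> X$i$j = 0) \<Longrightarrow> \<exists>V. X = (\<Sum>r\<in>S. proj (V r))"
  using assms
proof (induction S arbitrary: X rule: finite_induct)
  case empty
  then have "X = 0" by (simp add: vec_eq_iff)
  then show ?case by simp
next
  case (insert r S)
  note X = insert.prems(1) and supp = insert.prems(2)
  show ?case
  proof (cases "Re (X$r$r) = 0")
    case True
    then have xrr: "X$r$r = 0" using psd_diag(1)[OF X, of r] by (simp add: complex_eq_iff)
    have row: "X$r$j = 0" for j by (rule psd_zero_row[OF X xrr])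
    have col: "X$i$r = 0" for i using psd_herm[OF X, of r i] row[of i] by simp
    have "\<forall>i j. i \<notin> S \<or> j \<notin> S \<longrightarrow> X$i$j = 0"
    proof (intro allI impI)
      fix i j assume "i \<notin> S \<or> j \<notin> S"
      then show "X$i$j = 0"
        by (cases "i = r"; cases "j = r") (use row col supp in auto)
    qed
    then obtain V where V: "X = (\<Sum>k\<in>S. proj (V k))" using insert.IH[OF X] by blast
    have "(\<Sum>k\<in>insert r S. proj ((V(r := 0)) k)) = proj 0 + (\<Sum>k\<in>S. proj ((V(r := 0)) k))"
      using insert.hyps by simp
    also have "(\<Sum>k\<in>S. proj ((V(r := 0)) k)) = (\<Sum>k\<in>S. proj (V k))"
      using insert.hyps by (intro sum.cong) auto
    finally have "X = (\<Sum>k\<in>insert r S. proj ((V(r := 0)) k))" using V by (simp add: proj_zero)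
    then show ?thesis by blast
  next
    case False
    then have pos: "Re (X$r$r) > 0" using psd_diag(2)[OF X, of r] by simp
    obtain v where v: "psd (X - proj v)" "\<forall>j. (X - proj v)$r$j = 0" "\<forall>i. (X - proj v)$i$r = 0"
      "\<forall>i. X$i$r = 0 \<longrightarrow> v$i = 0"
      using schur_ex[OF X pos] by blast
    have "\<forall>i j. i \<notin> S \<or> j \<notin> S \<longrightarrow> (X - proj v)$i$j = 0"
    proof (intro allI impI)
      fix i j assume ij: "i \<notin> S \<or> j \<notin> S"
      show "(X - proj v)$i$j = 0"
      proof (cases "i = r \<or> j = r")
        case True
        then show ?thesis using v(2,3) by blast
      next
        case False
        then have "i \<notin> insert r S \<or> j \<notin> insert r S" using ij by auto
        moreover have "X$i$j = 0" using supp calculation by blast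
        moreover have "v$i = 0 \<or> v$j = 0" using supp calculation(1) v(4) by blast
        ultimately show ?thesis unfolding proj_def by auto
      qed
    qed
    then obtain V where V: "X - proj v = (\<Sum>k\<in>S. proj (V k))" using insert.IH[OF v(1)] by blast
    have "(\<Sum>k\<in>insert r S. proj ((V(r := v)) k)) = proj v + (\<Sum>k\<in>S. proj ((V(r := v)) k))"
      using insert.hyps by simp
    also have "(\<Sum>k\<in>S. proj ((V(r := v)) k)) = (\<Sum>k\<in>S. proj (V k))"
      using insert.hyps by (intro sum.cong) auto
    finally have "X = (\<Sum>k\<in>insert r S. proj ((V(r := v)) k))" using V by (simp add: algebra_simps)
    then show ?thesis by blast
  qed
qed

lemma psd_decomp:
  fixes X :: "complex^'k^'k"
  assumes "psd X"
  shows "\<exists>V. X = (\<Sum>r\<in>(UNIV::'k set). proj (V r))"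
  using decomp_aux[of UNIV X] assms by simp

lemma two_cases: "(s::2) = 0 \<or> s = 1"
  using exhaust_2[of s] by auto

lemma sum_UNIV_2: "(\<Sum>s\<in>(UNIV::2 set). f s) = f 0 + f 1"
proof -
  have u: "(UNIV::2 set) = {0, 1}" using two_cases by auto
  show ?thesis unfolding u by simp
qed

lemma sum_pair: "(\<Sum>p\<in>(UNIV::('a::finite \<times> 'b::finite) set). f p) = (\<Sum>x\<in>UNIV. \<Sum>y\<in>UNIV. f (x,y))"
  by (simp add: sum.cartesian_product)

lemma qf_pair:
  fixes X :: "complex^('a::finite \<times> 'b::finite)^('a \<times> 'b)"
  shows "qf X w = (\<Sum>s\<in>UNIV. \<Sum>i\<in>UNIV. \<Sum>t\<in>UNIV. \<Sum>j\<in>UNIV. cnj (w$(s,i)) * X$(s,i)$(t,j) * w$(t,j))"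
  unfolding qf_def sum_pair ..

lemma sum4_swap:
  fixes g :: "'a \<Rightarrow> 'b \<Rightarrow> 'c \<Rightarrow> 'd \<Rightarrow> complex"
  shows "(\<Sum>s\<in>S. \<Sum>i\<in>I. \<Sum>t\<in>T. \<Sum>j\<in>J. g s i t j) = (\<Sum>i\<in>I. \<Sum>j\<in>J. \<Sum>s\<in>S. \<Sum>t\<in>T. g s i t j)"
proof -
  have "(\<Sum>s\<in>S. \<Sum>i\<in>I. \<Sum>t\<in>T. \<Sum>j\<in>J. g s i t j) = (\<Sum>i\<in>I. \<Sum>s\<in>S. \<Sum>t\<in>T. \<Sum>j\<in>J. g s i t j)"
    by (rule sum.swap)
  also have "\<dots> = (\<Sum>i\<in>I. \<Sum>s\<in>S. \<Sum>j\<in>J. \<Sum>t\<in>T. g s i t j)"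
    by (intro sum.cong refl sum.swap)
  also have "\<dots> = (\<Sum>i\<in>I. \<Sum>j\<in>J. \<Sum>s\<in>S. \<Sum>t\<in>T. g s i t j)"
    by (intro sum.cong refl sum.swap)
  finally show ?thesis .
qed

lemma mscale_zero: "mscale 0 X = 0"
  unfolding mscale_def by (simp add: vec_eq_iff)

lemma L_zero: "clinear_map L \<Longrightarrow> L 0 = 0"
  unfolding clinear_map_def using mscale_zero by metis

lemma L_sum: "clinear_map L \<Longrightarrow> L (\<Sum>u\<in>U. f u) = (\<Sum>u\<in>U. L (f u))"
proof -
  assume lin: "clinear_map L"
  have "finite U \<Longrightarrow> ?thesis"
    by (induction U rule: finite_induct) (use lin in \<open>auto simp: L_zero clinear_map_def\<close>)
  moreover have "infinite U \<Longrightarrow> ?thesis" using L_zero[OF lin] by simp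
  ultimately show ?thesis by blast
qed

lemma L_scale: "clinear_map L \<Longrightarrow> L (mscale c X) = mscale c (L X)"
  unfolding clinear_map_def by blast

lemma congr_psd:
  fixes L :: "complex^'n^'n \<Rightarrow> complex^'m^'m" and \<beta> :: "2 \<Rightarrow> complex^'n" and A :: "2 \<Rightarrow> 2 \<Rightarrow> complex"
  assumes lin: "clinear_map L"
    and P: "psd (id2_tensor L (proj (psi_vec (\<beta> 0) (\<beta> 1))))"
  shows "psd (id2_tensor L (proj (psi_vec (\<Sum>u\<in>UNIV. A 0 u *s \<beta> u) (\<Sum>u\<in>UNIV. A 1 u *s \<beta> u))))"
proof -
  define \<psi> where "\<psi> s = (\<Sum>u\<in>UNIV. A s u *s \<beta> u)" for s
  have psi: "psi_vec (\<psi> 0) (\<psi> 1) $ (s,i) = \<psi> s $ i" for s i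
    using two_cases[of s] unfolding psi_vec_def by auto
  have psiB: "psi_vec (\<beta> 0) (\<beta> 1) $ (s,i) = \<beta> s $ i" for s i
    using two_cases[of s] unfolding psi_vec_def by auto
  have psi2: "\<psi> s $ i = (\<Sum>u\<in>UNIV. A s u * \<beta> u $ i)" for s i
    unfolding \<psi>_def by simp
  define M where "M u v = L (\<chi> i j. \<beta> u $ i * cnj (\<beta> v $ j))" for u v
  have TB: "id2_tensor L (proj (psi_vec (\<beta> 0) (\<beta> 1))) $ (u,i) $ (v,j) = M u v $ i $ j" for u v i j
    unfolding id2_tensor_def proj_def M_def by (simp add: psiB)
  have TA: "id2_tensor L (proj (psi_vec (\<psi> 0) (\<psi> 1))) $ (s,i) $ (t,j) =
      (\<Sum>u\<in>UNIV. \<Sum>v\<in>UNIV. A s u * cnj (A t v) * M u v $ i $ j)" for s t i j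
  proof -
    have "(\<chi> i j. proj (psi_vec (\<psi> 0) (\<psi> 1)) $ (s,i) $ (t,j)) =
        (\<Sum>u\<in>UNIV. \<Sum>v\<in>UNIV. mscale (A s u * cnj (A t v)) (\<chi> i j. \<beta> u $ i * cnj (\<beta> v $ j)))"
      by (simp add: vec_eq_iff proj_def psi psi2 mscale_def sum_product mult_ac)
    then have "L (\<chi> i j. proj (psi_vec (\<psi> 0) (\<psi> 1)) $ (s,i) $ (t,j)) =
        (\<Sum>u\<in>UNIV. \<Sum>v\<in>UNIV. mscale (A s u * cnj (A t v)) (M u v))"
      by (simp add: L_sum[OF lin] L_scale[OF lin] M_def)
    then show ?thesis unfolding id2_tensor_def by (simp add: mscale_def)
  qed
  show ?thesis
    unfolding psd_qf
  proof
    fix w :: "complex^(2 \<times> 'm)"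
    define w' where "w' = (\<chi> p. \<Sum>s\<in>UNIV. cnj (A s (fst p)) * w $ (s, snd p))"
    have "qf (id2_tensor L (proj (psi_vec (\<psi> 0) (\<psi> 1)))) w =
      (\<Sum>s\<in>UNIV. \<Sum>i\<in>UNIV. \<Sum>t\<in>UNIV. \<Sum>j\<in>UNIV. cnj (w$(s,i)) * (\<Sum>u\<in>UNIV. \<Sum>v\<in>UNIV. A s u * cnj (A t v) * M u v $ i $ j) * w$(t,j))"
      unfolding qf_pair TA ..
    also have "\<dots> = (\<Sum>i\<in>UNIV. \<Sum>j\<in>UNIV. \<Sum>s\<in>UNIV. \<Sum>t\<in>UNIV. cnj (w$(s,i)) * (\<Sum>u\<in>UNIV. \<Sum>v\<in>UNIV. A s u * cnj (A t v) * M u v $ i $ j) * w$(t,j))"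
      by (rule sum4_swap)
    also have "\<dots> = (\<Sum>i\<in>UNIV. \<Sum>j\<in>UNIV. \<Sum>u\<in>UNIV. \<Sum>v\<in>UNIV. cnj (w'$(u,i)) * M u v $ i $ j * w'$(v,j))"
    proof (rule sum.cong[OF refl], rule sum.cong[OF refl])
      fix i j
      show "(\<Sum>s\<in>UNIV. \<Sum>t\<in>UNIV. cnj (w$(s,i)) * (\<Sum>u\<in>UNIV. \<Sum>v\<in>UNIV. A s u * cnj (A t v) * M u v $ i $ j) * w$(t,j))
        = (\<Sum>u\<in>UNIV. \<Sum>v\<in>UNIV. cnj (w'$(u,i)) * M u v $ i $ j * w'$(v,j))"
        unfolding w'_def by (simp add: sum_UNIV_2 algebra_simps)
    qed
    also have "\<dots> = (\<Sum>u\<in>UNIV. \<Sum>i\<in>UNIV. \<Sum>v\<in>UNIV. \<Sum>j\<in>UNIV. cnj (w'$(u,i)) * M u v $ i $ j * w'$(v,j))"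
      by (rule sum4_swap[symmetric])
    also have "\<dots> = qf (id2_tensor L (proj (psi_vec (\<beta> 0) (\<beta> 1)))) w'"
      unfolding qf_pair TB ..
    finally have "qf (id2_tensor L (proj (psi_vec (\<psi> 0) (\<psi> 1)))) w = qf (id2_tensor L (proj (psi_vec (\<beta> 0) (\<beta> 1)))) w'" .
    then show "Im (qf (id2_tensor L (proj (psi_vec (\<Sum>u\<in>UNIV. A 0 u *s \<beta> u) (\<Sum>u\<in>UNIV. A 1 u *s \<beta> u)))) w) = 0 \<and>
          Re (qf (id2_tensor L (proj (psi_vec (\<Sum>u\<in>UNIV. A 0 u *s \<beta> u) (\<Sum>u\<in>UNIV. A 1 u *s \<beta> u)))) w) \<ge> 0"
      using P unfolding psd_qf \<psi>_def by simp
  qed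
qed

lemma sum_one_pt:
  fixes f :: "'k::finite \<Rightarrow> complex"
  assumes "\<And>k. k \<noteq> i \<Longrightarrow> f k = 0"
  shows "sum f UNIV = f i"
proof -
  have "sum f UNIV = sum f {i}"
    by (rule sum.mono_neutral_right) (use assms in auto)
  then show ?thesis by simp
qed

lemma cinner_smult_left: "cinner (c *s x) y = cnj c * cinner x y"
  unfolding cinner_def by (simp add: sum_distrib_left mult_ac)

lemma cinner_smult_right: "cinner x (c *s y) = c * cinner x y"
  unfolding cinner_def by (simp add: sum_distrib_left mult_ac)

lemma cinner_diff_right: "cinner x (y - z) = cinner x y - cinner x z"
  unfolding cinner_def by (simp add: algebra_simps sum_subtractf)

lemma cinner_self: "cinner x x = complex_of_real (\<Sum>i\<in>UNIV. (cmod (x$i))^2)"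
  unfolding cinner_def of_real_sum
  by (intro sum.cong refl) (simp only: complex_norm_square mult.commute)

lemma cinner_self_eq0:
  assumes "cinner x x = 0" shows "x = 0"
proof -
  have "complex_of_real (\<Sum>i\<in>UNIV. (cmod (x$i))^2) = 0" using assms unfolding cinner_self .
  then have "(\<Sum>i\<in>UNIV. (cmod (x$i))^2) = 0" by (simp only: of_real_eq_0_iff)
  then have "\<forall>i\<in>UNIV. (cmod (x$i))^2 = 0" by (subst (asm) sum_nonneg_eq_0_iff) auto
  then show ?thesis by (simp add: vec_eq_iff)
qed

lemma normalize_ex:
  fixes x :: "complex^'n"
  assumes "x \<noteq> 0"
  shows "\<exists>u c. cinner u u = 1 \<and> x = c *s u \<and> (\<exists>k. u = k *s x)"
proof -
  define n where "n = sqrt (\<Sum>i\<in>UNIV. (cmod (x$i))^2)"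
  have cx: "cinner x x = complex_of_real (n * n)"
    unfolding cinner_self n_def by (simp add: sum_nonneg)
  have "n \<noteq> 0" using cx cinner_self_eq0[of x] assms by auto
  define u where "u = complex_of_real (1 / n) *s x"
  have "cinner u u = complex_of_real (1/n) * complex_of_real (1/n) * complex_of_real (n * n)"
    unfolding u_def cinner_smult_left cinner_smult_right cx by simp
  also have "\<dots> = 1" using \<open>n \<noteq> 0\<close> by (simp add: field_simps)
  finally have "cinner u u = 1" .
  moreover have "x = complex_of_real n *s u"
    unfolding u_def using \<open>n \<noteq> 0\<close> by (simp add: vec_eq_iff)
  ultimately show ?thesis unfolding u_def by blast
qed

lemma unit_ex: "\<exists>u::complex^'n. cinner u u = 1"
proof -
  obtain i :: 'n where True by blast
  define u :: "complex^'n" where "u = (\<chi> k. if k = i then 1 else 0)"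
  have "cinner u u = cnj (u$i) * u$i"
    unfolding cinner_def by (rule sum_one_pt) (simp add: u_def)
  then show ?thesis unfolding u_def by auto
qed

lemma orth_ex:
  fixes u :: "complex^'n"
  assumes "CARD('n) \<ge> 2"
  shows "\<exists>w. cinner w w = 1 \<and> cinner u w = 0"
proof -
  obtain i j :: 'n where ij: "i \<noteq> j"
  proof -
    obtain i :: 'n where True by blast
    have "\<exists>j::'n. j \<noteq> i"
    proof (rule ccontr)
      assume "\<not> (\<exists>j::'n. j \<noteq> i)"
      then have "(UNIV::'n set) = {i}" by auto
      then have "CARD('n) = card {i}" by (metis)
      then have "CARD('n) = 1" by simp
      then show False using assms by simp
    qed
    then show ?thesis using that by blast
  qed
  define w0 :: "complex^'n" where "w0 = (\<chi> k. if k = i then cnj (u$j) else if k = j then - cnj (u$i) else 0)"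
  have w0: "cinner u w0 = 0"
  proof -
    have "cinner u w0 = cnj (u$i) * w0$i + cnj (u$j) * w0$j"
      unfolding cinner_def by (rule sum_two_pts[OF ij]) (simp add: w0_def)
    then show ?thesis using ij by (simp add: w0_def)
  qed
  show ?thesis
  proof (cases "w0 = 0")
    case False
    then obtain w c k where "cinner w w = 1" "w = k *s w0" using normalize_ex[of w0] by blast
    then show ?thesis using w0 by (intro exI[of _ w]) (simp add: cinner_smult_right)
  next
    case True
    then have "w0$j = 0" by simp
    then have "u$i = 0" using ij by (simp add: w0_def)
    define e :: "complex^'n" where "e = (\<chi> k. if k = i then 1 else 0)"
    have "cinner e e = cnj (e$i) * e$i"
      unfolding cinner_def by (rule sum_one_pt) (simp add: e_def)
    moreover have "cinner u e = cnj (u$i) * e$i"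
      unfolding cinner_def by (rule sum_one_pt) (simp add: e_def)
    ultimately show ?thesis using \<open>u$i = 0\<close> by (intro exI[of _ e]) (simp add: e_def)
  qed
qed

lemma gs:
  fixes a b :: "complex^'n"
  assumes "CARD('n) \<ge> 2"
  shows "\<exists>\<beta>0 \<beta>1 c00 c01 c10 c11. cinner \<beta>0 \<beta>0 = 1 \<and> cinner \<beta>1 \<beta>1 = 1 \<and> cinner \<beta>0 \<beta>1 = 0 \<and>
     a = c00 *s \<beta>0 + c01 *s \<beta>1 \<and> b = c10 *s \<beta>0 + c11 *s \<beta>1"
proof -
  obtain \<beta>0 c where b0: "cinner \<beta>0 \<beta>0 = 1" and ac: "a = c *s \<beta>0"
  proof (cases "a = 0")
    case True
    obtain u :: "complex^'n" where "cinner u u = 1" using unit_ex by blast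
    then show ?thesis using that[of u 0] True by (simp add: vec_eq_iff)
  next
    case False
    then show ?thesis using normalize_ex[of a] that by blast
  qed
  define b' where "b' = b - cinner \<beta>0 b *s \<beta>0"
  have ob': "cinner \<beta>0 b' = 0"
    unfolding b'_def cinner_diff_right cinner_smult_right b0 by simp
  have bb: "b = cinner \<beta>0 b *s \<beta>0 + b'" unfolding b'_def by simp
  obtain \<beta>1 d where b1: "cinner \<beta>1 \<beta>1 = 1" "cinner \<beta>0 \<beta>1 = 0" and bd: "b' = d *s \<beta>1"
  proof (cases "b' = 0")
    case True
    obtain w where "cinner w w = 1 \<and> cinner \<beta>0 w = 0" using orth_ex[OF assms] by blast
    then show ?thesis using that[of w 0] True by (simp add: vec_eq_iff)
  next
    case False
    then obtain u d k where "cinner u u = 1" "b' = d *s u" "u = k *s b'" using normalize_ex[of b'] by blast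
    moreover have "cinner \<beta>0 u = 0" using calculation(3) ob' by (simp add: cinner_smult_right)
    ultimately show ?thesis using that by blast
  qed
  have "a = c *s \<beta>0 + 0 *s \<beta>1" using ac by (simp add: vec_eq_iff)
  moreover have "b = cinner \<beta>0 b *s \<beta>0 + d *s \<beta>1" using bb bd by simp
  ultimately show ?thesis using b0 b1 by blast
qed

lemma id2_tensor_sum:
  assumes lin: "clinear_map L"
  shows "id2_tensor L (\<Sum>r\<in>U. f r) = (\<Sum>r\<in>U. id2_tensor L (f r))"
proof -
  have blk: "(\<chi> i j. (\<Sum>r\<in>U. f r) $ (s, i) $ (t, j)) = (\<Sum>r\<in>U. (\<chi> i j. f r $ (s, i) $ (t, j)))" for s t
    by (simp add: vec_eq_iff)
  show ?thesis
    unfolding id2_tensor_def blk L_sum[OF lin] by (simp add: vec_eq_iff)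
qed

lemma psd_proj_any:
  fixes L :: "complex^'n^'n \<Rightarrow> complex^'m^'m"
  assumes card: "CARD('n) \<ge> 2" and lin: "clinear_map L"
    and H: "\<forall>b0 b1 :: complex^'n. cinner b0 b0 = 1 \<and> cinner b1 b1 = 1 \<and> cinner b0 b1 = 0
        \<longrightarrow> psd (id2_tensor L (proj (psi_vec b0 b1)))"
  shows "psd (id2_tensor L (proj v))"
proof -
  define a :: "complex^'n" where "a = (\<chi> i. v$(0,i))"
  define b :: "complex^'n" where "b = (\<chi> i. v$(1,i))"
  have v: "v = psi_vec a b"
    unfolding psi_vec_def a_def b_def vec_eq_iff
  proof
    fix p :: "2 \<times> 'n"
    show "v $ p = (\<chi> p. if fst p = 0 then (\<chi> i. v $ (0, i)) $ snd p else (\<chi> i. v $ (1, i)) $ snd p) $ p"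
      using two_cases[of "fst p"] by (cases p) auto
  qed
  obtain \<beta>0 \<beta>1 c00 c01 c10 c11 where o: "cinner \<beta>0 \<beta>0 = 1" "cinner \<beta>1 \<beta>1 = 1" "cinner \<beta>0 \<beta>1 = 0"
    and ab: "a = c00 *s \<beta>0 + c01 *s \<beta>1" "b = c10 *s \<beta>0 + c11 *s \<beta>1"
    using gs[OF card, of a b] by blast
  define \<beta> :: "2 \<Rightarrow> complex^'n" where "\<beta> u = (if u = 0 then \<beta>0 else \<beta>1)" for u
  define A :: "2 \<Rightarrow> 2 \<Rightarrow> complex" where
    "A s u = (if s = 0 then (if u = 0 then c00 else c01) else (if u = 0 then c10 else c11))" for s u
  have b01: "\<beta> 0 = \<beta>0" "\<beta> 1 = \<beta>1" unfolding \<beta>_def by simp_all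
  have P: "psd (id2_tensor L (proj (psi_vec (\<beta> 0) (\<beta> 1))))"
    unfolding b01 using H o by blast
  have "a = (\<Sum>u\<in>UNIV. A 0 u *s \<beta> u)" "b = (\<Sum>u\<in>UNIV. A 1 u *s \<beta> u)"
    unfolding sum_UNIV_2 A_def \<beta>_def ab by simp_all
  then show ?thesis
    using congr_psd[OF lin P, of A] v by simp
qed

theorem lemma7:
  fixes L :: "complex^'n^'n \<Rightarrow> complex^'m^'m"
  assumes "CARD('n) \<ge> 2"
    and "clinear_map L"
    and "positive_map L"
  shows "two_positive L \<longleftrightarrow>
    (\<forall>b0 b1 :: complex^'n. cinner b0 b0 = 1 \<and> cinner b1 b1 = 1 \<and> cinner b0 b1 = 0
        \<longrightarrow> psd (id2_tensor L (proj (psi_vec b0 b1))))"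
proof
  assume "two_positive L"
  then show "\<forall>b0 b1 :: complex^'n. cinner b0 b0 = 1 \<and> cinner b1 b1 = 1 \<and> cinner b0 b1 = 0
        \<longrightarrow> psd (id2_tensor L (proj (psi_vec b0 b1)))"
    unfolding two_positive_def positive_map_def using psd_proj by blast
next
  assume H: "\<forall>b0 b1 :: complex^'n. cinner b0 b0 = 1 \<and> cinner b1 b1 = 1 \<and> cinner b0 b1 = 0
        \<longrightarrow> psd (id2_tensor L (proj (psi_vec b0 b1)))"
  show "two_positive L"
    unfolding two_positive_def positive_map_def
  proof (intro allI impI)
    fix X :: "complex^(2 \<times> 'n)^(2 \<times> 'n)"
    assume "psd X"
    then obtain V :: "2 \<times> 'n \<Rightarrow> complex^(2 \<times> 'n)" where V: "X = (\<Sum>r\<in>UNIV. proj (V r))"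
      using psd_decomp by blast
    show "psd (id2_tensor L X)"
      unfolding V id2_tensor_sum[OF assms(2)]
      by (rule psd_sum) (auto intro: psd_proj_any[OF assms(1) assms(2) H])
  qed
qed

end
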